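(* Let $(S,\mathcal{S})$ be a measurable space with $\Delta\in\mathcal{S}\otimes\mathcal{S}$ and let $\mathcal{H}\subseteq\mathcal{S}$ be a semiring with $\sigma(\mathcal{H})=\mathcal{S}$. Then $\mathcal{H}$ is self-dissecting.
   Context: $\Delta=\{(x,x)\mid x\in S\}$. For $A\subseteq S$ and, for each $n\in\mathbb{N}$, a family $\{A_{n,k}\mid k\in I_n\}$ of subsets of $S$ with $I_n\subseteq\mathbb{N}$, the sequence $(\{A_{n,k}\mid k\in I_n\})_{n}$ is a dissecting system for $A$ if: (i) for each $n$ the sets $A_{n,k}$, $k\in I_n$, are pairwise disjoint, $\bigcup_{k\in I_n}A_{n,k}\subseteq\bigcup_{k\in I_{n+1}}A_{n+1,k}\subseteq A$, and $\bigcup_{n,k}A_{n,k}=A$; (ii) for any distinct $x,y\in A$ there is $n(x,y)$ such that for all $n\ge n(x,y)$ some $A_{n,k}$ contains exactly one of $x,y$. A nonempty family $\mathcal{E}\subseteq\mathcal{P}(S)$ is self-dissecting if every $A\in\mathcal{E}$ has a dissecting system with $\{A_{n,k}\mid k\in I_n\}\subseteq\mathcal{E}$ for all $n$. *)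

theory Defs
  imports "HOL-Analysis.Analysis"
begin

definition dissecting_system ::
  "'a set \<Rightarrow> (nat \<Rightarrow> nat \<Rightarrow> 'a set) \<Rightarrow> (nat \<Rightarrow> nat set) \<Rightarrow> bool" where
  "dissecting_system B A I \<longleftrightarrow>
     (\<forall>n. disjoint_family_on (A n) (I n)) \<and>
     (\<forall>n. (\<Union>k\<in>I n. A n k) \<subseteq> (\<Union>k\<in>I (Suc n). A (Suc n) k)) \<and>
     (\<forall>n. (\<Union>k\<in>I n. A n k) \<subseteq> B) \<and>
     (\<Union>n. \<Union>k\<in>I n. A n k) = B \<and>
     (\<forall>x\<in>B. \<forall>y\<in>B. x \<noteq> y \<longrightarrow>
        (\<exists>N. \<forall>n\<ge>N. \<exists>k\<in>I n. (x \<in> A n k \<and> y \<notin> A n k) \<or> (y \<in> A n k \<and> x \<notin> A n k)))"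

definition self_dissecting :: "'a set set \<Rightarrow> bool" where
  "self_dissecting E \<longleftrightarrow> E \<noteq> {} \<and>
     (\<forall>B\<in>E. \<exists>A I. dissecting_system B A I \<and> (\<forall>n. A n ` I n \<subseteq> E))"

end

theory Submission
  imports Defs
begin

lemma determined_sigma:
  fixes eqv :: "'k set \<Rightarrow> 'b \<Rightarrow> 'b \<Rightarrow> bool"
  assumes E: "E \<in> sigma_sets \<Omega> Gen"
    and mono: "\<And>C D x y. C \<subseteq> D \<Longrightarrow> eqv D x y \<Longrightarrow> eqv C x y"
    and gen: "\<And>g. g \<in> Gen \<Longrightarrow> \<exists>C. countable C \<and> C \<subseteq> K \<and>
               (\<forall>x\<in>\<Omega>. \<forall>y\<in>\<Omega>. eqv C x y \<longrightarrow> (x \<in> g \<longleftrightarrow> y \<in> g))"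
  shows "\<exists>C. countable C \<and> C \<subseteq> K \<and> (\<forall>x\<in>\<Omega>. \<forall>y\<in>\<Omega>. eqv C x y \<longrightarrow> (x \<in> E \<longleftrightarrow> y \<in> E))"
  using E
proof (induction rule: sigma_sets.induct)
  case (Basic a) then show ?case by (rule gen)
next
  case Empty then show ?case by (intro exI[of _ "{}"]) auto
next
  case (Compl a) then show ?case by blast
next
  case (Union a)
  then obtain C where C: "\<And>i. countable (C i) \<and> C i \<subseteq> K \<and>
     (\<forall>x\<in>\<Omega>. \<forall>y\<in>\<Omega>. eqv (C i) x y \<longrightarrow> (x \<in> a i \<longleftrightarrow> y \<in> a i))"
    using choice[of "\<lambda>i C. countable C \<and> C \<subseteq> K \<and>
     (\<forall>x\<in>\<Omega>. \<forall>y\<in>\<Omega>. eqv C x y \<longrightarrow> (x \<in> a i \<longleftrightarrow> y \<in> a i))"] by blast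
  show ?case
  proof (intro exI[of _ "\<Union>i. C i"] conjI ballI impI)
    show "countable (\<Union>i. C i)" using C by auto
    show "(\<Union>i. C i) \<subseteq> K" using C by auto
    fix x y assume xy: "x \<in> \<Omega>" "y \<in> \<Omega>" "eqv (\<Union>i. C i) x y"
    have "\<And>i. eqv (C i) x y" using mono[OF _ xy(3)] by blast
    then show "x \<in> (\<Union>i. a i) \<longleftrightarrow> y \<in> (\<Union>i. a i)" using C xy by blast
  qed
qed

theorem proposition2p8:
  fixes M :: "'a measure" and H :: "'a set set"
  assumes "{(x, x) | x. x \<in> space M} \<in> sets (M \<Otimes>\<^sub>M M)"
    and "semiring_of_sets (space M) H"
    and "H \<subseteq> sets M"
    and "sigma_sets (space M) H = sets M"
  shows "self_dissecting H"
proof -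
  interpret S: semiring_of_sets "space M" H by fact
  define eq1 where "eq1 = (\<lambda>(C::'a set set) (p::'a\<times>'a) (q::'a\<times>'a). \<forall>c\<in>C. (fst p \<in> c \<longleftrightarrow> fst q \<in> c) \<and> (snd p \<in> c \<longleftrightarrow> snd q \<in> c))"
  obtain C where C: "countable C" "C \<subseteq> sets M"
    "\<forall>p\<in>space M \<times> space M. \<forall>q\<in>space M \<times> space M. eq1 C p q \<longrightarrow>
        (p \<in> {(x, x) | x. x \<in> space M} \<longleftrightarrow> q \<in> {(x, x) | x. x \<in> space M})"
  proof -
    have "\<exists>C. countable C \<and> C \<subseteq> sets M \<and> (\<forall>p\<in>space M \<times> space M. \<forall>q\<in>space M \<times> space M. eq1 C p q \<longrightarrow>
        (p \<in> {(x, x) | x. x \<in> space M} \<longleftrightarrow> q \<in> {(x, x) | x. x \<in> space M}))"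
    proof (rule determined_sigma[where Gen="{a \<times> b | a b. a \<in> sets M \<and> b \<in> sets M}" and eqv=eq1 and K="sets M"])
      show "{(x, x) | x. x \<in> space M} \<in> sigma_sets (space M \<times> space M) {a \<times> b | a b. a \<in> sets M \<and> b \<in> sets M}"
        using assms(1) by (simp only: sets_pair_measure)
    next
      fix C D :: "'a set set" and p q assume "C \<subseteq> D" "eq1 D p q" then show "eq1 C p q" unfolding eq1_def by blast
    next
      fix g assume "g \<in> {a \<times> b | a b. a \<in> sets M \<and> b \<in> sets M}"
      then obtain a b where g: "g = a \<times> b" "a \<in> sets M" "b \<in> sets M" by blast
      show "\<exists>C. countable C \<and> C \<subseteq> sets M \<and> (\<forall>p\<in>space M \<times> space M. \<forall>q\<in>space M \<times> space M. eq1 C p q \<longrightarrow> (p \<in> g \<longleftrightarrow> q \<in> g))"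
        by (intro exI[of _ "{a, b}"]) (auto simp: g eq1_def)
    qed
    then show ?thesis by (elim exE conjE) (rule that)
  qed
  have sepC: "\<exists>c\<in>C. (x \<in> c \<longleftrightarrow> y \<notin> c)" if "x \<in> space M" "y \<in> space M" "x \<noteq> y" for x y
  proof (rule ccontr)
    assume "\<not> ?thesis"
    then have e: "eq1 C (x, x) (x, y)" unfolding eq1_def by auto
    have "(x, x) \<in> space M \<times> space M" "(x, y) \<in> space M \<times> space M" using that by auto
    with C(3) e have "(x, x) \<in> {(x, x) | x. x \<in> space M} \<longleftrightarrow> (x, y) \<in> {(x, x) | x. x \<in> space M}"
      by blast
    with that show False by auto
  qed
  have exG: "\<exists>G. countable G \<and> G \<subseteq> H \<and> (\<forall>x\<in>space M. \<forall>y\<in>space M. (\<forall>g\<in>G. x \<in> g \<longleftrightarrow> y \<in> g) \<longrightarrow> (x \<in> c \<longleftrightarrow> y \<in> c))"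
    if "c \<in> C" for c
  proof (rule determined_sigma[where Gen=H and K=H and eqv="\<lambda>G x y. \<forall>g\<in>G. x \<in> g \<longleftrightarrow> y \<in> g"])
    show "c \<in> sigma_sets (space M) H" using that C(2) assms(4) by auto
  next
    fix C D :: "'a set set" and x y
    assume "C \<subseteq> D" "\<forall>g\<in>D. x \<in> g \<longleftrightarrow> y \<in> g"
    then show "\<forall>g\<in>C. x \<in> g \<longleftrightarrow> y \<in> g" by blast
  next
    fix h assume "h \<in> H"
    then show "\<exists>C. countable C \<and> C \<subseteq> H \<and> (\<forall>x\<in>space M. \<forall>y\<in>space M. (\<forall>g\<in>C. x \<in> g \<longleftrightarrow> y \<in> g) \<longrightarrow> (x \<in> h \<longleftrightarrow> y \<in> h))"
      by (intro exI[of _ "{h}"]) auto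
  qed
  have allG: "\<forall>c\<in>C. \<exists>G. countable G \<and> G \<subseteq> H \<and> (\<forall>x\<in>space M. \<forall>y\<in>space M. (\<forall>g\<in>G. x \<in> g \<longleftrightarrow> y \<in> g) \<longrightarrow> (x \<in> c \<longleftrightarrow> y \<in> c))"
    by (intro ballI) (rule exG)
  from bchoice[OF allG] obtain Gc where Gc0: "\<forall>c\<in>C. countable (Gc c) \<and> Gc c \<subseteq> H \<and> (\<forall>x\<in>space M. \<forall>y\<in>space M. (\<forall>g\<in>Gc c. x \<in> g \<longleftrightarrow> y \<in> g) \<longrightarrow> (x \<in> c \<longleftrightarrow> y \<in> c))"
    ..
  have Gc: "\<And>c. c \<in> C \<Longrightarrow> countable (Gc c) \<and> Gc c \<subseteq> H \<and> (\<forall>x\<in>space M. \<forall>y\<in>space M. (\<forall>g\<in>Gc c. x \<in> g \<longleftrightarrow> y \<in> g) \<longrightarrow> (x \<in> c \<longleftrightarrow> y \<in> c))"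
    by (rule bspec[OF Gc0])
  define G0 where "G0 = insert {} (\<Union>c\<in>C. Gc c)"
  have G0: "countable G0" "G0 \<noteq> {}" "G0 \<subseteq> H" unfolding G0_def using Gc C(1) by auto
  define g where "g = from_nat_into G0"
  have rg: "range g = G0" unfolding g_def using G0 by (simp add: range_from_nat_into)
  have gH: "g i \<in> H" for i using rg G0 by auto
  have sepg: "\<exists>i. (x \<in> g i \<longleftrightarrow> y \<notin> g i)" if xy: "x \<in> space M" "y \<in> space M" "x \<noteq> y" for x y
  proof -
    obtain c where c: "c \<in> C" "x \<in> c \<longleftrightarrow> y \<notin> c" using sepC[OF xy] by blast
    then obtain h where "h \<in> Gc c" "x \<in> h \<longleftrightarrow> y \<notin> h" using Gc[OF c(1)] xy by blast
    then have "h \<in> range g" using rg c(1) unfolding G0_def by auto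
    then show ?thesis using \<open>x \<in> h \<longleftrightarrow> y \<notin> h\<close> by auto
  qed
  define DC where "DC p i = (SOME D. D \<subseteq> H \<and> finite D \<and> disjoint D \<and> p - g i = \<Union>D)" for p i
  have DC: "DC p i \<subseteq> H \<and> finite (DC p i) \<and> disjoint (DC p i) \<and> p - g i = \<Union>(DC p i)" if "p \<in> H" for p i
    unfolding DC_def by (rule someI_ex) (use S.Diff_cover[OF that gH] in blast)
  have main: "\<forall>B\<in>H. \<exists>A I. dissecting_system B A I \<and> (\<forall>n. A n ` I n \<subseteq> H)"
  proof
    fix B assume B: "B \<in> H"
    then have Bsp: "B \<subseteq> space M" by (rule S.sets_into_space)
    define P where "P = rec_nat {B} (\<lambda>n Q. \<Union>p\<in>Q. insert (p \<inter> g n) (DC p n))"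
    have P0: "P 0 = {B}" and PS: "P (Suc n) = (\<Union>p\<in>P n. insert (p \<inter> g n) (DC p n))" for n
      unfolding P_def by simp_all
    have inv: "finite (P n) \<and> P n \<subseteq> H \<and> disjoint (P n) \<and> \<Union>(P n) = B \<and>
       (\<forall>p\<in>P n. \<forall>i<n. p \<subseteq> g i \<or> p \<inter> g i = {})" for n
    proof (induction n)
      case 0 then show ?case by (simp add: P0 B)
    next
      case (Suc n)
      then have IH: "finite (P n)" "P n \<subseteq> H" "disjoint (P n)" "\<Union>(P n) = B"
        "\<And>p i. p \<in> P n \<Longrightarrow> i < n \<Longrightarrow> p \<subseteq> g i \<or> p \<inter> g i = {}" by auto
      have sub: "q \<subseteq> p" if "p \<in> P n" "q \<in> insert (p \<inter> g n) (DC p n)" for p q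
        using that DC[of p n] IH(2) by auto
      have fin: "finite (P (Suc n))" unfolding PS using IH DC by auto
      have inH: "P (Suc n) \<subseteq> H"
      proof
        fix q assume "q \<in> P (Suc n)"
        then obtain p where p: "p \<in> P n" "q \<in> insert (p \<inter> g n) (DC p n)" unfolding PS by blast
        then have pH: "p \<in> H" using IH(2) by blast
        show "q \<in> H"
        proof (cases "q = p \<inter> g n")
          case True then show ?thesis using pH gH S.Int by blast
        next
          case False then have "q \<in> DC p n" using p by blast
          then show ?thesis using DC[OF pH] by blast
        qed
      qed
      have un: "\<Union>(P (Suc n)) = B"
      proof -
        have "\<Union>(insert (p \<inter> g n) (DC p n)) = p" if "p \<in> P n" for p
          using DC[of p n] IH(2) that by auto
        moreover have "\<Union>(P (Suc n)) = (\<Union>p\<in>P n. \<Union>(insert (p \<inter> g n) (DC p n)))" unfolding PS by blast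
        ultimately have "\<Union>(P (Suc n)) = (\<Union>p\<in>P n. p)" by simp
        then show ?thesis using IH(4) by simp
      qed
      have dis: "disjoint (P (Suc n))"
      proof (rule disjointI)
        fix a b assume ab: "a \<in> P (Suc n)" "b \<in> P (Suc n)" "a \<noteq> b"
        then obtain p q where pq: "p \<in> P n" "a \<in> insert (p \<inter> g n) (DC p n)"
          "q \<in> P n" "b \<in> insert (q \<inter> g n) (DC q n)" unfolding PS by blast
        show "a \<inter> b = {}"
        proof (cases "p = q")
          case False
          then have "p \<inter> q = {}" using IH(3) pq by (auto dest: disjointD)
          then show ?thesis using sub[OF pq(1,2)] sub[OF pq(3,4)] by blast
        next
          case True
          have D: "DC p n \<subseteq> H \<and> finite (DC p n) \<and> disjoint (DC p n) \<and> p - g n = \<Union>(DC p n)"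
            using DC IH(2) pq(1) by blast
          show ?thesis
          proof (cases "a = p \<inter> g n")
            case True
            then have "b \<in> DC p n" using ab pq \<open>p = q\<close> by auto
            then have "b \<subseteq> p - g n" using D by auto
            then show ?thesis using True by auto
          next
            case False
            then have a: "a \<in> DC p n" using pq by auto
            show ?thesis
            proof (cases "b = p \<inter> g n")
              case True
              have "a \<subseteq> p - g n" using D a by auto
              then show ?thesis using True by auto
            next
              case False
              then have "b \<in> DC p n" using pq \<open>p = q\<close> by auto
              then show ?thesis using D a ab(3) by (auto dest: disjointD)
            qed
          qed
        qed
      qed
      have ref: "\<forall>a\<in>P (Suc n). \<forall>i<Suc n. a \<subseteq> g i \<or> a \<inter> g i = {}"
      proof (intro ballI allI impI)
        fix a i assume a: "a \<in> P (Suc n)" "i < Suc n"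
        then obtain p where p: "p \<in> P n" "a \<in> insert (p \<inter> g n) (DC p n)" unfolding PS by blast
        show "a \<subseteq> g i \<or> a \<inter> g i = {}"
        proof (cases "i < n")
          case True
          then show ?thesis using IH(5)[OF p(1) True] sub[OF p] by blast
        next
          case False
          then have "i = n" using a by auto
          have "p \<in> H" using p IH(2) by auto
          then show ?thesis using p DC[of p n] \<open>i = n\<close> by auto
        qed
      qed
      show ?case using fin inH dis un ref by blast
    qed
    define f where "f n = (SOME h. bij_betw h {0..<card (P n)} (P n))" for n
    have f: "bij_betw (f n) {0..<card (P n)} (P n)" for n
      unfolding f_def by (rule someI_ex[OF ex_bij_betw_nat_finite]) (use inv[of n] in blast)
    define I where "I n = {0..<card (P n)}" for n
    have img: "f n ` I n = P n" for n using f[of n] unfolding I_def bij_betw_def by simp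
    have UI: "(\<Union>k\<in>I n. f n k) = B" for n using img[of n] inv[of n] by simp
    show "\<exists>A I. dissecting_system B A I \<and> (\<forall>n. A n ` I n \<subseteq> H)"
    proof (intro exI[of _ f] exI[of _ I] conjI)
      show "\<forall>n. f n ` I n \<subseteq> H"
      proof
        fix n show "f n ` I n \<subseteq> H" using img[of n] inv[of n] by simp
      qed
      show "dissecting_system B f I"
        unfolding dissecting_system_def
      proof (intro conjI allI ballI impI)
        fix n show "disjoint_family_on (f n) (I n)"
          unfolding disjoint_family_on_def
        proof (intro ballI impI)
          fix k l assume kl: "k \<in> I n" "l \<in> I n" "k \<noteq> l"
          then have "f n k \<noteq> f n l" using f[of n] unfolding I_def bij_betw_def inj_on_def by blast
          moreover have "f n k \<in> P n" "f n l \<in> P n" using img kl by auto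
          ultimately show "f n k \<inter> f n l = {}" using inv[of n] by (auto dest: disjointD)
        qed
      next
        fix n show "(\<Union>k\<in>I n. f n k) \<subseteq> (\<Union>k\<in>I (Suc n). f (Suc n) k)" using UI by simp
      next
        fix n show "(\<Union>k\<in>I n. f n k) \<subseteq> B" using UI by simp
      next
        show "(\<Union>n. \<Union>k\<in>I n. f n k) = B" using UI by simp
      next
        fix x y assume xy: "x \<in> B" "y \<in> B" "x \<noteq> y"
        then obtain i where i: "x \<in> g i \<longleftrightarrow> y \<notin> g i" using sepg Bsp by blast
        show "\<exists>N. \<forall>n\<ge>N. \<exists>k\<in>I n. x \<in> f n k \<and> y \<notin> f n k \<or> y \<in> f n k \<and> x \<notin> f n k"
        proof (intro exI[of _ "Suc i"] allI impI)
          fix n assume n: "Suc i \<le> n"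
          obtain k where k: "k \<in> I n" "x \<in> f n k" using UI[of n] xy by blast
          have fk: "f n k \<in> P n" using img k by auto
          have "f n k \<subseteq> g i \<or> f n k \<inter> g i = {}" using inv[of n] fk n by auto
          then have "y \<notin> f n k" using i k by auto
          then show "\<exists>k\<in>I n. x \<in> f n k \<and> y \<notin> f n k \<or> y \<in> f n k \<and> x \<notin> f n k" using k by blast
        qed
      qed
    qed
  qed
  show ?thesis unfolding self_dissecting_def using main S.empty_sets by blast
qed

end
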